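(* Let $w\in\mathcal{M}_{n_x,n_y}$. The words $v$ occurring with nonzero coefficient in $Hw$ are precisely the words $v\in\mathcal{M}_{n_x,n_y}$ such that: (i) if $i\in E^x_v$ then $f^x_v(i)=f^x_w(i)-1$; (ii) if $i\notin E^x_v$ then $f^x_v(i)\ge f^x_w(i)$. The coefficient of such $v$ in $Hw$ is $(-1)^{|E^x_v|}$.
   Context: $\mathcal{M}_{n_x,n_y}$ is the set of words in letters $x,y$ with $n_x$ $x$'s and $n_y$ $y$'s; $\mathcal{F}_{n_x,n_y}$ its $\mathbb{Z}$-span. Number the $x$'s of a word $1,\dots,n_x$ from left to right. $f^x_w(i)$ is the number of $y$'s strictly to the left of the $i$-th $x$ in $w$. $E^x_v\subseteq\{1,\dots,n_x\}$ is the set of $i$ such that the $i$-th $x$ of $v$ is immediately followed by a $y$. Partial order: $w_0\le w_1$ iff $f^x_{w_0}(i)\le f^x_{w_1}(i)$ for all $i$. $\langle w_0|w_1\rangle=1$ if $w_0\le w_1$, else $0$. $H$ is the linear map on $\mathcal{F}_{n_x,n_y}$ with $\langle u|v\rangle=\langle v|Hu\rangle$ for all $u,v$. *)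

theory Defs
  imports Main
begin

datatype letter = X | Y

type_synonym word = "letter list"

definition M :: "nat \<Rightarrow> nat \<Rightarrow> word set" where
  "M nx ny = {w. count_list w X = nx \<and> count_list w Y = ny}"

fun fxs_aux :: "nat \<Rightarrow> word \<Rightarrow> nat list" where
  "fxs_aux k [] = []"
| "fxs_aux k (X # w) = k # fxs_aux k w"
| "fxs_aux k (Y # w) = fxs_aux (Suc k) w"

text \<open>f^x_w(i), for the i-th x of w, i = 1..n_x: number of y's strictly left of it.\<close>
definition fx :: "word \<Rightarrow> nat \<Rightarrow> nat" where
  "fx w i = fxs_aux 0 w ! (i - 1)"

fun followedY :: "word \<Rightarrow> bool list" where
  "followedY [] = []"
| "followedY (X # w) = (case w of Y # _ \<Rightarrow> True | _ \<Rightarrow> False) # followedY w"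
| "followedY (Y # w) = followedY w"

definition Ex :: "nat \<Rightarrow> word \<Rightarrow> nat set" where
  "Ex nx v = {i \<in> {1..nx}. followedY v ! (i - 1)}"

definition wle :: "nat \<Rightarrow> word \<Rightarrow> word \<Rightarrow> bool" where
  "wle nx w0 w1 \<longleftrightarrow> (\<forall>i \<in> {1..nx}. fx w0 i \<le> fx w1 i)"

definition pair :: "nat \<Rightarrow> word \<Rightarrow> word \<Rightarrow> int" where
  "pair nx w0 w1 = (if wle nx w0 w1 then 1 else 0)"

text \<open>H u, as its coefficient function on basis words (an element of the Z-span of M_{nx,ny}),
  characterised by <u|v> = <v|H u> for all basis words v (bilinearly extended pairing).\<close>
definition H :: "nat \<Rightarrow> nat \<Rightarrow> word \<Rightarrow> (word \<Rightarrow> int)" where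
  "H nx ny u = (THE c. (\<forall>v. v \<notin> M nx ny \<longrightarrow> c v = 0) \<and>
     (\<forall>v \<in> M nx ny. (\<Sum>w \<in> M nx ny. pair nx v w * c w) = pair nx u v))"

end

theory Submission
  imports Defs
begin


lemma count_XY: "length w = count_list w X + count_list w Y"
proof (induction w)
  case (Cons a w) then show ?case by (cases a) auto
qed simp

lemma finite_M: "finite (M nx ny)"
proof -
  have "M nx ny \<subseteq> {w. set w \<subseteq> UNIV \<and> length w = nx + ny}"
    unfolding M_def using count_XY by auto
  moreover have "finite (UNIV :: letter set)"
  proof -
    have "(UNIV :: letter set) = {X, Y}" using letter.exhaust by auto
    thus ?thesis by (metis finite.emptyI finite.insertI)
  qed
  ultimately show ?thesis using finite_subset finite_lists_length_eq by blast
qed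

lemma fxs_len: "length (fxs_aux k w) = count_list w X"
  by (induction k w rule: fxs_aux.induct) auto

lemma fxs_sorted: "sorted (fxs_aux k w) \<and> (\<forall>x\<in>set (fxs_aux k w). k \<le> x \<and> x \<le> k + count_list w Y)"
proof (induction k w rule: fxs_aux.induct)
  case (1 k) then show ?case by simp
next
  case (2 k w) then show ?case by auto
next
  case (3 k w) then show ?case by fastforce
qed

lemma followedY_len: "length (followedY w) = count_list w X"
  by (induction w rule: followedY.induct) auto

lemma head_aux:
  "(case w of Y # _ \<Rightarrow> True | _ \<Rightarrow> False) \<longleftrightarrow>
   (if 0 < count_list w X then k < fxs_aux k w ! 0 else 0 < count_list w Y)"
proof (cases w)
  case Nil then show ?thesis by simp
next
  case (Cons a t)
  show ?thesis
  proof (cases a)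
    case X then show ?thesis using Cons by simp
  next
    case Y
    show ?thesis
    proof (cases "0 < count_list t X")
      case True
      then have "fxs_aux (Suc k) t ! 0 \<in> set (fxs_aux (Suc k) t)"
        using fxs_len[of "Suc k" t] by (intro nth_mem) simp
      then show ?thesis using Cons Y True fxs_sorted[of "Suc k" t] by fastforce
    qed (use Cons Y in auto)
  qed
qed

lemma followedY_nth:
  "j < count_list w X \<Longrightarrow> followedY w ! j \<longleftrightarrow>
    (if Suc j < count_list w X then fxs_aux k w ! j < fxs_aux k w ! Suc j
     else fxs_aux k w ! j < k + count_list w Y)"
proof (induction k w arbitrary: j rule: fxs_aux.induct)
  case (1 k) then show ?case by simp
next
  case (2 k w)
  show ?case
  proof (cases j)
    case 0
    then show ?thesis using head_aux[of w k] by auto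
  next
    case (Suc j')
    then show ?thesis using 2 by auto
  qed
next
  case (3 k w) then show ?case by simp
qed

lemma fxs_inj: "fxs_aux k w1 = fxs_aux k w2 \<Longrightarrow> count_list w1 Y = count_list w2 Y \<Longrightarrow> w1 = w2"
proof (induction k w1 arbitrary: w2 rule: fxs_aux.induct)
  case (1 k)
  then have "count_list w2 X = 0" using fxs_len[of k w2] by simp
  then show ?case using 1 count_XY[of w2] by simp
next
  case (2 k w)
  show ?case
  proof (cases w2)
    case Nil then show ?thesis using 2 by simp
  next
    case (Cons a t)
    show ?thesis
    proof (cases a)
      case X then show ?thesis using 2 Cons by simp
    next
      case Y
      then have "fxs_aux (Suc k) t = k # fxs_aux k w" using 2 Cons by simp
      then have "k \<in> set (fxs_aux (Suc k) t)" by simp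
      then show ?thesis using fxs_sorted[of "Suc k" t] by fastforce
    qed
  qed
next
  case (3 k w)
  show ?case
  proof (cases w2)
    case Nil then show ?thesis using 3 by simp
  next
    case (Cons a t)
    show ?thesis
    proof (cases a)
      case Y then show ?thesis using 3 Cons by simp
    next
      case X
      then have "k \<in> set (fxs_aux (Suc k) w)" using 3 Cons by simp
      then show ?thesis using fxs_sorted[of "Suc k" w] by fastforce
    qed
  qed
qed

fun mk :: "nat \<Rightarrow> nat \<Rightarrow> nat list \<Rightarrow> word" where
  "mk k n [] = replicate n Y"
| "mk k 0 (a # L) = X # mk k 0 L"
| "mk k (Suc n) (a # L) = (if a \<le> k then X # mk k (Suc n) L else Y # mk (Suc k) n (a # L))"

lemma fxs_rep: "fxs_aux k (replicate n Y) = []"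
  by (induction n arbitrary: k) auto

lemma cnt_rep: "count_list (replicate n Y) X = 0" "count_list (replicate n Y) Y = n"
  by (induction n) auto

lemma mk_correct:
  "sorted L \<Longrightarrow> (\<forall>x\<in>set L. k \<le> x \<and> x \<le> k + n) \<Longrightarrow>
   fxs_aux k (mk k n L) = L \<and> count_list (mk k n L) X = length L \<and> count_list (mk k n L) Y = n"
proof (induction k n L rule: mk.induct)
  case (1 k n) then show ?case by (simp add: fxs_rep cnt_rep)
next
  case (2 k a L) then show ?case by auto
next
  case (3 k n a L)
  show ?case
  proof (cases "a \<le> k")
    case True then show ?thesis using 3 by auto
  next
    case False
    have "\<forall>x\<in>set (a # L). Suc k \<le> x \<and> x \<le> Suc k + n" using 3(3,4) False by auto
    then show ?thesis using 3(2)[OF False 3(3)] False by simp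
  qed
qed

lemma fx_bound: "w \<in> M nx ny \<Longrightarrow> i \<in> {1..nx} \<Longrightarrow> fx w i \<le> ny"
proof -
  assume a: "w \<in> M nx ny" "i \<in> {1..nx}"
  then have "fx w i \<in> set (fxs_aux 0 w)" unfolding fx_def M_def using fxs_len[of 0 w]
    by (intro nth_mem) auto
  then show ?thesis using fxs_sorted[of 0 w] a(1) unfolding M_def by auto
qed

lemma fx_mono: "w \<in> M nx ny \<Longrightarrow> 1 \<le> i \<Longrightarrow> i \<le> j \<Longrightarrow> j \<le> nx \<Longrightarrow> fx w i \<le> fx w j"
  unfolding fx_def M_def using fxs_sorted[of 0 w] fxs_len[of 0 w]
  by (auto simp: sorted_iff_nth_mono)

lemma Ex_char: "w \<in> M nx ny \<Longrightarrow>
   i \<in> Ex nx w \<longleftrightarrow> i \<in> {1..nx} \<and> fx w i < (if i < nx then fx w (Suc i) else ny)"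
proof -
  assume a: "w \<in> M nx ny"
  show ?thesis
  proof (cases "i \<in> {1..nx}")
    case True
    then have "followedY w ! (i-1) \<longleftrightarrow>
      (if Suc (i-1) < nx then fxs_aux 0 w ! (i-1) < fxs_aux 0 w ! Suc (i-1) else fxs_aux 0 w ! (i-1) < 0 + ny)"
      using followedY_nth[of "i-1" w 0] a unfolding M_def by auto
    then show ?thesis using True unfolding Ex_def fx_def by auto
  qed (auto simp: Ex_def)
qed

lemma fx_inj: "w1 \<in> M nx ny \<Longrightarrow> w2 \<in> M nx ny \<Longrightarrow> (\<forall>i\<in>{1..nx}. fx w1 i = fx w2 i) \<Longrightarrow> w1 = w2"
proof -
  assume a: "w1 \<in> M nx ny" "w2 \<in> M nx ny" "\<forall>i\<in>{1..nx}. fx w1 i = fx w2 i"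
  have "fxs_aux 0 w1 = fxs_aux 0 w2"
  proof (rule nth_equalityI)
    show "length (fxs_aux 0 w1) = length (fxs_aux 0 w2)" using a fxs_len unfolding M_def by simp
    fix j assume "j < length (fxs_aux 0 w1)"
    then have "Suc j \<in> {1..nx}" using a fxs_len unfolding M_def by simp
    then show "fxs_aux 0 w1 ! j = fxs_aux 0 w2 ! j" using a(3) unfolding fx_def by fastforce
  qed
  then show ?thesis using fxs_inj a unfolding M_def by auto
qed

lemma fx_surj:
  assumes mono: "\<And>i j. 1 \<le> i \<Longrightarrow> i \<le> j \<Longrightarrow> j \<le> nx \<Longrightarrow> f i \<le> (f j :: nat)"
    and bnd: "\<And>i. i \<in> {1..nx} \<Longrightarrow> f i \<le> ny"
  shows "\<exists>w \<in> M nx ny. \<forall>i\<in>{1..nx}. fx w i = f i"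
proof -
  define L where "L = map f [1..<Suc nx]"
  have s: "sorted L" unfolding L_def sorted_iff_nth_mono
    by (auto simp del: upt_Suc simp add: nth_upt intro!: mono)
  have b: "\<forall>x\<in>set L. 0 \<le> x \<and> x \<le> 0 + ny" unfolding L_def using bnd by auto
  have c: "fxs_aux 0 (mk 0 ny L) = L \<and> count_list (mk 0 ny L) X = length L \<and> count_list (mk 0 ny L) Y = ny"
    using mk_correct[OF s b] .
  show ?thesis
  proof (intro bexI ballI)
    show "mk 0 ny L \<in> M nx ny" using c unfolding M_def L_def by simp
    fix i assume "i \<in> {1..nx}"
    then show "fx (mk 0 ny L) i = f i" using c unfolding fx_def L_def
      by (auto simp del: upt_Suc simp add: nth_upt)
  qed
qed



definition up :: "nat \<Rightarrow> nat \<Rightarrow> word \<Rightarrow> nat set \<Rightarrow> word" where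
  "up nx ny w S = (SOME w'. w' \<in> M nx ny \<and> (\<forall>i\<in>{1..nx}. fx w' i = fx w i + (if i \<in> S then 1 else 0)))"

lemma Ex_sub: "Ex nx w \<subseteq> {1..nx}" unfolding Ex_def by auto

lemma up_props:
  assumes w: "w \<in> M nx ny" and S: "S \<subseteq> Ex nx w"
  shows "up nx ny w S \<in> M nx ny \<and> (\<forall>i\<in>{1..nx}. fx (up nx ny w S) i = fx w i + (if i \<in> S then 1 else 0))"
proof -
  let ?f = "\<lambda>i. fx w i + (if i \<in> S then 1 else 0)"
  have "\<exists>w' \<in> M nx ny. \<forall>i\<in>{1..nx}. fx w' i = ?f i"
  proof (rule fx_surj)
    fix i j assume ij: "1 \<le> i" "i \<le> j" "j \<le> nx"
    show "?f i \<le> ?f j"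
    proof (cases "i = j")
      case False
      then have "i < j" using ij by simp
      show ?thesis
      proof (cases "i \<in> S")
        case True
        then have "i \<in> Ex nx w" using S by auto
        then have "fx w i < fx w (Suc i)" using Ex_char[OF w] \<open>i < j\<close> ij by auto
        moreover have "fx w (Suc i) \<le> fx w j" using fx_mono[OF w] \<open>i < j\<close> ij by auto
        ultimately show ?thesis by simp
      next
        case False
        then show ?thesis using fx_mono[OF w, of i j] ij by auto
      qed
    qed simp
  next
    fix i assume i: "i \<in> {1..nx}"
    show "?f i \<le> ny"
    proof (cases "i \<in> S")
      case True
      then have "i \<in> Ex nx w" using S by auto
      then have "fx w i < (if i < nx then fx w (Suc i) else ny)" using Ex_char[OF w] by auto
      moreover have "i < nx \<Longrightarrow> fx w (Suc i) \<le> ny" using fx_bound[OF w] i by auto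
      ultimately show ?thesis using True by (auto split: if_splits)
    next
      case False then show ?thesis using fx_bound[OF w i] by simp
    qed
  qed
  then have "\<exists>w'. w' \<in> M nx ny \<and> (\<forall>i\<in>{1..nx}. fx w' i = ?f i)" by blast
  then show ?thesis unfolding up_def by (rule someI_ex)
qed



lemma prod_sum:
  assumes "finite E"
  shows "(\<Sum>S\<in>Pow E. (-1::int)^card S * (if \<forall>i\<in>E. (i\<in>S \<longrightarrow> P i) \<and> (i\<notin>S \<longrightarrow> Q i) then 1 else 0))
       = (\<Prod>i\<in>E. (if Q i then 1 else 0) - (if P i then 1 else 0))"
  using assms
proof (induction E rule: finite_induct)
  case empty then show ?case by simp
next
  case (insert a E)
  let ?c = "\<lambda>S. (if \<forall>i\<in>E. (i\<in>S \<longrightarrow> P i) \<and> (i\<notin>S \<longrightarrow> Q i) then 1 else 0::int)"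
  let ?g = "\<lambda>S. (-1::int)^card S * (if \<forall>i\<in>insert a E. (i\<in>S \<longrightarrow> P i) \<and> (i\<notin>S \<longrightarrow> Q i) then 1 else 0)"
  have disj: "Pow E \<inter> insert a ` Pow E = {}" using insert(2) by auto
  have inj: "inj_on (insert a) (Pow E)" using insert(2) unfolding inj_on_def
    by (metis Diff_insert_absorb PowD subsetD)
  have fin: "finite (Pow E)" using insert(1) by simp
  have s1: "\<And>S. S \<in> Pow E \<Longrightarrow> ?g S = (if Q a then 1 else 0) * ((-1)^card S * ?c S)"
    using insert(2) by auto
  have s2: "\<And>S. S \<in> Pow E \<Longrightarrow> ?g (insert a S) = - (if P a then 1 else 0) * ((-1)^card S * ?c S)"
  proof -
    fix S assume S: "S \<in> Pow E"
    then have "finite S" using insert(1) finite_subset by auto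
    moreover have "a \<notin> S" using S insert(2) by auto
    ultimately have "card (insert a S) = Suc (card S)" by simp
    moreover have "(\<forall>i\<in>insert a E. (i\<in>insert a S \<longrightarrow> P i) \<and> (i\<notin>insert a S \<longrightarrow> Q i)) \<longleftrightarrow>
        P a \<and> (\<forall>i\<in>E. (i\<in>S \<longrightarrow> P i) \<and> (i\<notin>S \<longrightarrow> Q i))" using insert(2) by auto
    ultimately show "?g (insert a S) = - (if P a then 1 else 0) * ((-1)^card S * ?c S)" by auto
  qed
  have "(\<Sum>S\<in>Pow (insert a E). ?g S) = (\<Sum>S\<in>Pow E. ?g S) + (\<Sum>S\<in>insert a ` Pow E. ?g S)"
    unfolding Pow_insert using disj fin by (intro sum.union_disjoint) auto
  also have "(\<Sum>S\<in>insert a ` Pow E. ?g S) = (\<Sum>S\<in>Pow E. ?g (insert a S))"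
    by (simp only: sum.reindex[OF inj] comp_def)
  also have "\<dots> = - (if P a then 1 else 0) * (\<Sum>S\<in>Pow E. (-1)^card S * ?c S)"
    using s2 by (simp add: sum_distrib_left)
  also have "(\<Sum>S\<in>Pow E. ?g S) = (if Q a then 1 else 0) * (\<Sum>S\<in>Pow E. (-1)^card S * ?c S)"
    using s1 by (simp add: sum_distrib_left)
  finally show ?case using insert by (simp add: algebra_simps)
qed

lemma prod_ind:
  assumes "finite E"
  shows "(\<Prod>i\<in>E. if p i then c else (0::int)) = (if \<forall>i\<in>E. p i then c ^ card E else 0)"
proof (cases "\<forall>i\<in>E. p i")
  case True
  then have "(\<Prod>i\<in>E. if p i then c else (0::int)) = (\<Prod>i\<in>E. c)" by (intro prod.cong) auto
  then show ?thesis using True by simp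
next
  case False
  then show ?thesis using assms by (auto simp: prod_zero_iff)
qed

definition Mu :: "nat \<Rightarrow> nat \<Rightarrow> (word \<Rightarrow> int) \<Rightarrow> word \<Rightarrow> int" where
  "Mu nx ny d z = (\<Sum>S\<in>Pow (Ex nx z). (-1::int)^card S * d (up nx ny z S))"

definition Zop :: "nat \<Rightarrow> nat \<Rightarrow> (word \<Rightarrow> int) \<Rightarrow> word \<Rightarrow> int" where
  "Zop nx ny c v = (\<Sum>w\<in>M nx ny. pair nx v w * c w)"

lemma fin_Ex: "finite (Ex nx w)" using Ex_sub finite_subset by blast

lemma Kc:
  assumes z: "z \<in> M nx ny" and y: "y \<in> M nx ny"
  shows "(\<Sum>S\<in>Pow (Ex nx z). (-1::int)^card S * pair nx (up nx ny z S) y) = (if z = y then 1 else 0)"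
proof -
  let ?E = "Ex nx z"
  let ?A = "\<forall>i\<in>{1..nx} - ?E. fx z i \<le> fx y i"
  have eq: "\<And>S. S \<in> Pow ?E \<Longrightarrow> pair nx (up nx ny z S) y = (if ?A then 1 else 0) *
     (if \<forall>i\<in>?E. (i\<in>S \<longrightarrow> Suc (fx z i) \<le> fx y i) \<and> (i\<notin>S \<longrightarrow> fx z i \<le> fx y i) then 1 else 0)"
  proof -
    fix S assume S: "S \<in> Pow ?E"
    have u: "\<forall>i\<in>{1..nx}. fx (up nx ny z S) i = fx z i + (if i \<in> S then 1 else 0)"
      using up_props[OF z] S by auto
    have "wle nx (up nx ny z S) y \<longleftrightarrow> ?A \<and> (\<forall>i\<in>?E. (i\<in>S \<longrightarrow> Suc (fx z i) \<le> fx y i) \<and> (i\<notin>S \<longrightarrow> fx z i \<le> fx y i))"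
      unfolding wle_def using u S Ex_sub[of nx z] by (auto split: if_splits)
    then show "?thesis S" unfolding pair_def by auto
  qed
  have "(\<Sum>S\<in>Pow ?E. (-1::int)^card S * pair nx (up nx ny z S) y) =
        (if ?A then 1 else 0) * (\<Sum>S\<in>Pow ?E. (-1::int)^card S *
     (if \<forall>i\<in>?E. (i\<in>S \<longrightarrow> Suc (fx z i) \<le> fx y i) \<and> (i\<notin>S \<longrightarrow> fx z i \<le> fx y i) then 1 else 0))"
    unfolding sum_distrib_left
  proof (rule sum.cong[OF refl])
    fix S assume "S \<in> Pow ?E"
    then show "(-1::int)^card S * pair nx (up nx ny z S) y = (if ?A then 1 else 0) * ((-1::int)^card S *
     (if \<forall>i\<in>?E. (i\<in>S \<longrightarrow> Suc (fx z i) \<le> fx y i) \<and> (i\<notin>S \<longrightarrow> fx z i \<le> fx y i) then 1 else 0))"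
      by (simp only: eq mult.left_commute)
  qed
  also have "\<dots> = (if ?A then 1 else 0) * (\<Prod>i\<in>?E. (if fx z i \<le> fx y i then 1 else 0) - (if Suc (fx z i) \<le> fx y i then 1 else 0))"
    using prod_sum[OF fin_Ex] by simp
  also have "(\<Prod>i\<in>?E. (if fx z i \<le> fx y i then 1 else 0) - (if Suc (fx z i) \<le> fx y i then 1 else (0::int)))
      = (\<Prod>i\<in>?E. if fx z i = fx y i then 1 else 0)" by (intro prod.cong) auto
  also have "\<dots> = (if \<forall>i\<in>?E. fx z i = fx y i then 1 else 0)" using prod_ind[OF fin_Ex] by simp
  also have "(if ?A then 1 else 0) * (if \<forall>i\<in>?E. fx z i = fx y i then 1 else 0) = (if z = y then 1 else (0::int))"
  proof -
    have "?A \<and> (\<forall>i\<in>?E. fx z i = fx y i) \<longleftrightarrow> z = y"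
    proof
      assume h: "?A \<and> (\<forall>i\<in>?E. fx z i = fx y i)"
      then have le: "\<forall>i\<in>{1..nx}. fx z i \<le> fx y i" by force
      show "z = y"
      proof (rule ccontr)
        assume "z \<noteq> y"
        then obtain i0 where "i0 \<in> {1..nx}" "fx z i0 \<noteq> fx y i0" using fx_inj[OF z y] by blast
        define D where "D = {i\<in>{1..nx}. fx z i < fx y i}"
        have "i0 \<in> D" using \<open>i0 \<in> {1..nx}\<close> \<open>fx z i0 \<noteq> fx y i0\<close> le unfolding D_def by force
        have finD: "finite D" unfolding D_def by simp
        define i where "i = Max D"
        have iD: "i \<in> D" unfolding i_def using finD \<open>i0 \<in> D\<close> by (intro Max_in) auto
        have imax: "\<And>j. j \<in> D \<Longrightarrow> j \<le> i" unfolding i_def using finD by simp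
        have "i \<notin> ?E" using h iD unfolding D_def by auto
        then have ni: "\<not> fx z i < (if i < nx then fx z (Suc i) else ny)" using Ex_char[OF z] iD unfolding D_def by auto
        show False
        proof (cases "i < nx")
          case True
          then have "Suc i \<notin> D" using imax by fastforce
          have si: "Suc i \<in> {1..nx}" using True by simp
          have "fx z (Suc i) = fx y (Suc i)" using bspec[OF le si] \<open>Suc i \<notin> D\<close> si unfolding D_def by auto
          moreover have "fx y i \<le> fx y (Suc i)" using fx_mono[OF y, of i "Suc i"] True iD unfolding D_def by auto
          ultimately show False using ni True iD unfolding D_def by auto
        next
          case False
          then show False using ni iD fx_bound[OF y, of i] unfolding D_def by auto
        qed
      qed
    qed auto
    then show ?thesis by auto
  qed
  finally show ?thesis .
qed



definition rank :: "nat \<Rightarrow> word \<Rightarrow> nat" where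
  "rank nx z = (\<Sum>i\<in>{1..nx}. fx z i)"

lemma rank_bound: "z \<in> M nx ny \<Longrightarrow> rank nx z \<le> nx * ny"
proof -
  assume z: "z \<in> M nx ny"
  have "rank nx z \<le> (\<Sum>i\<in>{1..nx}. ny)" unfolding rank_def using fx_bound[OF z] by (intro sum_mono) auto
  then show ?thesis by simp
qed

lemma up_rank:
  assumes z: "z \<in> M nx ny" and S: "S \<subseteq> Ex nx z" "S \<noteq> {}"
  shows "rank nx z < rank nx (up nx ny z S)"
proof -
  have u: "\<forall>i\<in>{1..nx}. fx (up nx ny z S) i = fx z i + (if i \<in> S then 1 else 0)"
    using up_props[OF z S(1)] by auto
  obtain a where a: "a \<in> S" using S(2) by auto
  then have "a \<in> {1..nx}" using S(1) Ex_sub[of nx z] by blast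
  show ?thesis unfolding rank_def
    by (rule sum_strict_mono_ex1) (use u a \<open>a \<in> {1..nx}\<close> in auto)
qed

lemma up_empty: "z \<in> M nx ny \<Longrightarrow> up nx ny z {} = z"
  using up_props[of z nx ny "{}"] fx_inj[of "up nx ny z {}" nx ny z] by auto

lemma tri:
  assumes h: "\<And>z. z \<in> M nx ny \<Longrightarrow> Mu nx ny d z = 0"
  shows "z \<in> M nx ny \<Longrightarrow> d z = 0"
proof (induction z rule: measure_induct_rule[where f="\<lambda>z. nx * ny - rank nx z"])
  case (less z)
  let ?E = "Ex nx z"
  have "0 = Mu nx ny d z" using h less(2) by simp
  also have "\<dots> = (-1::int)^card ({}::nat set) * d (up nx ny z {}) +
     (\<Sum>S\<in>Pow ?E - {{}}. (-1::int)^card S * d (up nx ny z S))"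
    unfolding Mu_def using fin_Ex by (intro sum.remove) auto
  also have "(\<Sum>S\<in>Pow ?E - {{}}. (-1::int)^card S * d (up nx ny z S)) = 0"
  proof (rule sum.neutral, rule ballI)
    fix S assume S: "S \<in> Pow ?E - {{}}"
    then have m: "up nx ny z S \<in> M nx ny" using up_props[OF less(2)] by auto
    have "rank nx z < rank nx (up nx ny z S)" using up_rank[OF less(2)] S by auto
    moreover have "rank nx (up nx ny z S) \<le> nx * ny" using rank_bound[OF m] .
    ultimately have "nx * ny - rank nx (up nx ny z S) < nx * ny - rank nx z" by linarith
    then have "d (up nx ny z S) = 0" using less(1) m by blast
    then show "(-1::int)^card S * d (up nx ny z S) = 0" by simp
  qed
  finally show ?case using up_empty[OF less(2)] by simp
qed

lemma MZ:
  assumes z: "z \<in> M nx ny"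
  shows "Mu nx ny (Zop nx ny c) z = c z"
proof -
  have "Mu nx ny (Zop nx ny c) z =
    (\<Sum>S\<in>Pow (Ex nx z). \<Sum>w\<in>M nx ny. (-1::int)^card S * pair nx (up nx ny z S) w * c w)"
    unfolding Mu_def Zop_def by (simp add: sum_distrib_left mult.assoc)
  also have "\<dots> = (\<Sum>w\<in>M nx ny. \<Sum>S\<in>Pow (Ex nx z). (-1::int)^card S * pair nx (up nx ny z S) w * c w)"
    by (rule sum.swap)
  also have "\<dots> = (\<Sum>w\<in>M nx ny. c w * (\<Sum>S\<in>Pow (Ex nx z). (-1::int)^card S * pair nx (up nx ny z S) w))"
    by (simp add: sum_distrib_left mult.commute mult.left_commute)
  also have "\<dots> = (\<Sum>w\<in>M nx ny. c w * (if z = w then 1 else 0))"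
    using Kc[OF z] by simp
  also have "\<dots> = c z" using z finite_M by (simp add: if_distrib cong: if_cong)
  finally show ?thesis .
qed

lemma Mu_diff: "Mu nx ny (\<lambda>v. a v - b v) z = Mu nx ny a z - Mu nx ny b z"
  unfolding Mu_def by (simp add: right_diff_distrib sum_subtractf)

lemma H_eq:
  assumes u: "u \<in> M nx ny"
  shows "H nx ny u = (\<lambda>w. if w \<in> M nx ny then Mu nx ny (pair nx u) w else 0)"
proof -
  define c0 where "c0 = (\<lambda>w. if w \<in> M nx ny then Mu nx ny (pair nx u) w else 0)"
  have Zc0: "\<And>v. v \<in> M nx ny \<Longrightarrow> Zop nx ny c0 v = pair nx u v"
  proof -
    have "\<And>z. z \<in> M nx ny \<Longrightarrow> Mu nx ny (\<lambda>v. Zop nx ny c0 v - pair nx u v) z = 0"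
      unfolding Mu_diff using MZ unfolding c0_def by simp
    then show "\<And>v. v \<in> M nx ny \<Longrightarrow> Zop nx ny c0 v = pair nx u v"
      using tri[of nx ny "\<lambda>v. Zop nx ny c0 v - pair nx u v"] by fastforce
  qed
  show ?thesis unfolding H_def c0_def[symmetric]
  proof (rule the_equality)
    show "(\<forall>v. v \<notin> M nx ny \<longrightarrow> c0 v = 0) \<and>
      (\<forall>v\<in>M nx ny. (\<Sum>w\<in>M nx ny. pair nx v w * c0 w) = pair nx u v)"
      using Zc0 unfolding Zop_def by (auto simp: c0_def)
  next
    fix c assume c: "(\<forall>v. v \<notin> M nx ny \<longrightarrow> c v = 0) \<and>
      (\<forall>v\<in>M nx ny. (\<Sum>w\<in>M nx ny. pair nx v w * c w) = pair nx u v)"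
    show "c = c0"
    proof
      fix z
      show "c z = c0 z"
      proof (cases "z \<in> M nx ny")
        case True
        have "c z = Mu nx ny (Zop nx ny c) z" using MZ[OF True] by simp
        also have "\<dots> = Mu nx ny (pair nx u) z" unfolding Mu_def
        proof (rule sum.cong[OF refl])
          fix S assume "S \<in> Pow (Ex nx z)"
          then have "up nx ny z S \<in> M nx ny" using up_props[OF True] by auto
          then show "(-1::int)^card S * Zop nx ny c (up nx ny z S) = (-1::int)^card S * pair nx u (up nx ny z S)"
            using c unfolding Zop_def by simp
        qed
        finally show ?thesis using True c0_def by simp
      qed (use c c0_def in simp)
    qed
  qed
qed

lemma Mu_val:
  assumes v: "v \<in> M nx ny"
  shows "Mu nx ny (pair nx u) v = (if (\<forall>i\<in>{1..nx} - Ex nx v. fx u i \<le> fx v i) \<and> (\<forall>i\<in>Ex nx v. fx u i = Suc (fx v i))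
     then (-1)^card (Ex nx v) else 0)"
proof -
  let ?E = "Ex nx v"
  let ?A = "\<forall>i\<in>{1..nx} - ?E. fx u i \<le> fx v i"
  have eq: "\<And>S. S \<in> Pow ?E \<Longrightarrow> pair nx u (up nx ny v S) = (if ?A then 1 else 0) *
     (if \<forall>i\<in>?E. (i\<in>S \<longrightarrow> fx u i \<le> Suc (fx v i)) \<and> (i\<notin>S \<longrightarrow> fx u i \<le> fx v i) then 1 else 0)"
  proof -
    fix S assume S: "S \<in> Pow ?E"
    have uu: "\<forall>i\<in>{1..nx}. fx (up nx ny v S) i = fx v i + (if i \<in> S then 1 else 0)"
      using up_props[OF v] S by auto
    have "wle nx u (up nx ny v S) \<longleftrightarrow> ?A \<and> (\<forall>i\<in>?E. (i\<in>S \<longrightarrow> fx u i \<le> Suc (fx v i)) \<and> (i\<notin>S \<longrightarrow> fx u i \<le> fx v i))"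
      unfolding wle_def using uu S Ex_sub[of nx v] by (auto split: if_splits)
    then show "?thesis S" unfolding pair_def by auto
  qed
  have "Mu nx ny (pair nx u) v =
        (if ?A then 1 else 0) * (\<Sum>S\<in>Pow ?E. (-1::int)^card S *
     (if \<forall>i\<in>?E. (i\<in>S \<longrightarrow> fx u i \<le> Suc (fx v i)) \<and> (i\<notin>S \<longrightarrow> fx u i \<le> fx v i) then 1 else 0))"
    unfolding sum_distrib_left Mu_def
  proof (rule sum.cong[OF refl])
    fix S assume "S \<in> Pow ?E"
    then show "(-1::int)^card S * pair nx u (up nx ny v S) = (if ?A then 1 else 0) * ((-1::int)^card S *
     (if \<forall>i\<in>?E. (i\<in>S \<longrightarrow> fx u i \<le> Suc (fx v i)) \<and> (i\<notin>S \<longrightarrow> fx u i \<le> fx v i) then 1 else 0))"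
      by (simp only: eq mult.left_commute)
  qed
  also have "\<dots> = (if ?A then 1 else 0) * (\<Prod>i\<in>?E. (if fx u i \<le> fx v i then 1 else 0) - (if fx u i \<le> Suc (fx v i) then 1 else 0))"
    using prod_sum[OF fin_Ex] by simp
  also have "(\<Prod>i\<in>?E. (if fx u i \<le> fx v i then 1 else 0) - (if fx u i \<le> Suc (fx v i) then 1 else (0::int)))
      = (\<Prod>i\<in>?E. if fx u i = Suc (fx v i) then -1 else 0)" by (intro prod.cong) auto
  also have "\<dots> = (if \<forall>i\<in>?E. fx u i = Suc (fx v i) then (-1) ^ card ?E else 0)" using prod_ind[OF fin_Ex] by simp
  finally show ?thesis by simp
qed

theorem mainTheorem8:
  fixes nx ny :: nat and w v :: word
  assumes "w \<in> M nx ny"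
  shows "(H nx ny w v \<noteq> 0 \<longleftrightarrow>
            v \<in> M nx ny \<and>
            (\<forall>i \<in> {1..nx}.
               (i \<in> Ex nx v \<longrightarrow> int (fx v i) = int (fx w i) - 1) \<and>
               (i \<notin> Ex nx v \<longrightarrow> fx v i \<ge> fx w i)))
       \<and> (v \<in> M nx ny \<and>
            (\<forall>i \<in> {1..nx}.
               (i \<in> Ex nx v \<longrightarrow> int (fx v i) = int (fx w i) - 1) \<and>
               (i \<notin> Ex nx v \<longrightarrow> fx v i \<ge> fx w i))
          \<longrightarrow> H nx ny w v = (-1) ^ card (Ex nx v))"
proof (cases "v \<in> M nx ny")
  case False
  then show ?thesis using H_eq[OF assms] by simp
next
  case True
  have cond: "(\<forall>i \<in> {1..nx}.
               (i \<in> Ex nx v \<longrightarrow> int (fx v i) = int (fx w i) - 1) \<and>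
               (i \<notin> Ex nx v \<longrightarrow> fx v i \<ge> fx w i)) \<longleftrightarrow>
     (\<forall>i\<in>{1..nx} - Ex nx v. fx w i \<le> fx v i) \<and> (\<forall>i\<in>Ex nx v. fx w i = Suc (fx v i))"
    using Ex_sub[of nx v] by auto
  show ?thesis using H_eq[OF assms] Mu_val[OF True, of w] True cond by simp
qed


end
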